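(* Let $f:\mathbb{R}^n\to\mathbb{R}$ be convex and $L$-smooth for some $L>0$, and suppose $f$ has a minimizer $x^\star\in\mathbb{R}^n$. Let $\{x^k\}$ be generated by APBM with models $\hat f^k$ satisfying, for every $k\ge1$: (a) $\hat f^k$ is convex; (b) $\hat f^k(x)\ge f(y^k)+\langle\nabla f(y^k),x-y^k\rangle$ for all $x\in\mathbb{R}^n$; (c) $\hat f^k(x)\le f(x)$ for all $x\in\mathbb{R}^n$. Then for every $k\ge0$, $$f(x^k)-f(x^\star)\le\frac{2L\|x^0-x^\star\|^2}{(k+1)^2}.$$
   Context: APBM (accelerated proximal bundle method) for minimizing $f$: given $L>0$ and an initial point $x^0\in\mathbb{R}^n$, set $y^1=x^0$ and $t_1=1$. For $k=1,2,\dots$, given a model $\hat f^k:\mathbb{R}^n\to\mathbb{R}$, set $x^k=\arg\min_{x\in\mathbb{R}^n}\ \hat f^k(x)+\frac{L}{2}\|x-y^k\|^2$, $t_{k+1}=\frac{1+\sqrt{1+4t_k^2}}{2}$, $y^{k+1}=x^k+\frac{t_k-1}{t_{k+1}}(x^k-x^{k-1})$. A differentiable $f$ is $L$-smooth if $\|\nabla f(x)-\nabla f(y)\|\le L\|x-y\|$ for all $x,y\in\mathbb{R}^n$ (Euclidean norm). *)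

theory Defs
  imports "HOL-Analysis.Analysis"
begin

end

theory Submission
  imports Defs
begin

lemma descent:
  fixes f :: "'a::euclidean_space \<Rightarrow> real" and g :: "'a \<Rightarrow> 'a"
  assumes L: "L \<ge> 0"
    and der: "\<And>z. (f has_derivative (\<lambda>h. g z \<bullet> h)) (at z)"
    and lip: "\<And>u v. norm (g u - g v) \<le> L * norm (u - v)"
  shows "f v \<le> f u + g u \<bullet> (v - u) + L / 2 * (norm (v - u))\<^sup>2"
proof -
  define d where "d = v - u"
  define \<psi> where "\<psi> s = f (u + s *\<^sub>R d) - s * (g u \<bullet> d) - L / 2 * s\<^sup>2 * (norm d)\<^sup>2" for s :: real
  have D: "DERIV \<psi> s :> (g (u + s *\<^sub>R d) \<bullet> d - g u \<bullet> d - L * s * (norm d)\<^sup>2)" for s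
  proof -
    have l: "((\<lambda>s::real. u + s *\<^sub>R d) has_derivative (\<lambda>h. h *\<^sub>R d)) (at s)"
      by (auto intro!: derivative_eq_intros)
    have "((\<lambda>s. f (u + s *\<^sub>R d)) has_derivative (\<lambda>h. g (u + s *\<^sub>R d) \<bullet> (h *\<^sub>R d))) (at s)"
      using has_derivative_compose[OF l der] by (simp add: o_def)
    then have "((\<lambda>s. f (u + s *\<^sub>R d)) has_real_derivative (g (u + s *\<^sub>R d) \<bullet> d)) (at s)"
      unfolding has_field_derivative_def by (rule has_derivative_eq_rhs) (auto simp: fun_eq_iff)
    then show ?thesis unfolding \<psi>_def
      by (auto intro!: derivative_eq_intros simp: power2_eq_square)
  qed
  have "\<psi> 1 \<le> \<psi> 0"
  proof (rule DERIV_nonpos_imp_nonincreasing[of 0 1])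
    fix s :: real assume s: "0 \<le> s" "s \<le> 1"
    have "g (u + s *\<^sub>R d) \<bullet> d - g u \<bullet> d = (g (u + s *\<^sub>R d) - g u) \<bullet> d"
      by (simp add: inner_diff_left)
    also have "\<dots> \<le> norm (g (u + s *\<^sub>R d) - g u) * norm d"
      by (rule norm_cauchy_schwarz)
    also have "\<dots> \<le> L * norm (s *\<^sub>R d) * norm d"
      using lip[of "u + s *\<^sub>R d" u] by (simp add: mult_right_mono)
    also have "\<dots> = L * s * (norm d)\<^sup>2" using s by (simp add: power2_eq_square)
    finally show "\<exists>y. DERIV \<psi> s :> y \<and> y \<le> 0" using D by fastforce
  qed simp
  then show ?thesis unfolding \<psi>_def d_def by simp
qed


lemma norm_add_sq:
  fixes a b :: "'a::real_inner"
  shows "(norm (a + b))\<^sup>2 = (norm a)\<^sup>2 + 2 * (a \<bullet> b) + (norm b)\<^sup>2"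
  by (simp add: power2_norm_eq_inner inner_add_left inner_add_right inner_commute algebra_simps)

lemma prox_ineq:
  fixes h :: "'a::real_inner \<Rightarrow> real"
  assumes conv: "convex_on UNIV h" and L: "L > 0"
    and mn: "\<And>z. h x + L / 2 * (norm (x - y))\<^sup>2 \<le> h z + L / 2 * (norm (z - y))\<^sup>2"
  shows "h x + L / 2 * (norm (x - y))\<^sup>2 + L / 2 * (norm (z - x))\<^sup>2 \<le> h z + L / 2 * (norm (z - y))\<^sup>2"
proof -
  define A where "A = h z - h x + L * ((x - y) \<bullet> (z - x))"
  define B where "B = L / 2 * (norm (z - x))\<^sup>2"
  have B0: "B \<ge> 0" using L unfolding B_def by simp
  have sA: "0 \<le> A + s * B" if s: "0 < s" "s \<le> 1" for s
  proof -
    define zs where "zs = (1 - s) *\<^sub>R x + s *\<^sub>R z"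
    have c: "h zs \<le> (1 - s) * h x + s * h z"
      unfolding zs_def using convex_onD[OF conv] s by simp
    have e: "zs - y = (x - y) + s *\<^sub>R (z - x)" unfolding zs_def by (simp add: algebra_simps)
    have n: "(norm (zs - y))\<^sup>2 = (norm (x - y))\<^sup>2 + 2 * s * ((x - y) \<bullet> (z - x)) + s\<^sup>2 * (norm (z - x))\<^sup>2"
      unfolding e norm_add_sq by (simp add: power_mult_distrib)
    have "h x + L / 2 * (norm (x - y))\<^sup>2 \<le> h zs + L / 2 * (norm (zs - y))\<^sup>2" by (rule mn)
    then have "0 \<le> s * A + s * (s * B)"
      using c unfolding n A_def B_def by (simp add: algebra_simps power2_eq_square)
    then have "0 \<le> s * (A + s * B)" by (simp add: algebra_simps)
    then show ?thesis using s by (simp add: zero_le_mult_iff)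
  qed
  have A0: "A \<ge> 0"
  proof (rule ccontr)
    assume "\<not> A \<ge> 0"
    then have An: "A < 0" by simp
    define s where "s = min 1 (- A / (B + 1))"
    have s0: "0 < s" "s \<le> 1" using An B0 unfolding s_def by (auto simp: divide_neg_pos)
    have "s * B \<le> (- A / (B + 1)) * B" using B0 unfolding s_def by (intro mult_right_mono) auto
    also have "\<dots> < - A" using An B0 by (simp add: field_simps)
    finally have "A + s * B < 0" by simp
    with sA[OF s0] show False by simp
  qed
  have "z - y = (z - x) + (x - y)" by simp
  then have eq: "(norm (z - y))\<^sup>2 = (norm (z - x))\<^sup>2 + 2 * ((x - y) \<bullet> (z - x)) + (norm (x - y))\<^sup>2"
    by (metis norm_add_sq inner_commute)
  have "L / 2 * (norm (z - y))\<^sup>2 = L / 2 * (norm (z - x))\<^sup>2 + L * ((x - y) \<bullet> (z - x)) + L / 2 * (norm (x - y))\<^sup>2"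
    unfolding eq by (simp add: algebra_simps)
  then show ?thesis using A0 unfolding A_def by linarith
qed


theorem corollary1:
  fixes f :: "'a::euclidean_space \<Rightarrow> real"
    and gradf :: "'a \<Rightarrow> 'a"
    and L :: real
    and xstar :: "'a"
    and fhat :: "nat \<Rightarrow> 'a \<Rightarrow> real"
    and x y :: "nat \<Rightarrow> 'a"
    and t :: "nat \<Rightarrow> real"
  assumes L_pos: "L > 0"
    and f_convex: "convex_on UNIV f"
    and f_grad: "\<And>z. (f has_derivative (\<lambda>h. gradf z \<bullet> h)) (at z)"
    and f_smooth: "\<And>u v. norm (gradf u - gradf v) \<le> L * norm (u - v)"
    and xstar_min: "\<And>z. f xstar \<le> f z"
    and y1: "y 1 = x 0"
    and t1: "t 1 = 1"
    and x_step: "\<And>k z. k \<ge> 1 \<Longrightarrow>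
        fhat k (x k) + L / 2 * (norm (x k - y k))\<^sup>2 \<le> fhat k z + L / 2 * (norm (z - y k))\<^sup>2"
    and t_step: "\<And>k. k \<ge> 1 \<Longrightarrow> t (k + 1) = (1 + sqrt (1 + 4 * (t k)\<^sup>2)) / 2"
    and y_step: "\<And>k. k \<ge> 1 \<Longrightarrow>
        y (k + 1) = x k + ((t k - 1) / t (k + 1)) *\<^sub>R (x k - x (k - 1))"
    and model_convex: "\<And>k. k \<ge> 1 \<Longrightarrow> convex_on UNIV (fhat k)"
    and model_lower: "\<And>k z. k \<ge> 1 \<Longrightarrow> fhat k z \<ge> f (y k) + gradf (y k) \<bullet> (z - y k)"
    and model_upper: "\<And>k z. k \<ge> 1 \<Longrightarrow> fhat k z \<le> f z"
  shows "\<forall>k. f (x k) - f xstar \<le> 2 * L * (norm (x 0 - xstar))\<^sup>2 / (real k + 1)\<^sup>2"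
proof -
  have L0: "L \<ge> 0" using L_pos by simp
  have desc: "\<And>u v. f v \<le> f u + gradf u \<bullet> (v - u) + L / 2 * (norm (v - u))\<^sup>2"
    by (rule descent[OF L0 f_grad f_smooth])
  have K: "f (x k) + L / 2 * (norm (z - x k))\<^sup>2 \<le> f z + L / 2 * (norm (z - y k))\<^sup>2"
    if k: "k \<ge> 1" for k z
  proof -
    have p: "fhat k (x k) + L / 2 * (norm (x k - y k))\<^sup>2 + L / 2 * (norm (z - x k))\<^sup>2
        \<le> fhat k z + L / 2 * (norm (z - y k))\<^sup>2"
      by (rule prox_ineq[OF model_convex[OF k] L_pos x_step[OF k]])
    have "f (x k) \<le> f (y k) + gradf (y k) \<bullet> (x k - y k) + L / 2 * (norm (x k - y k))\<^sup>2"
      by (rule desc)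
    also have "\<dots> \<le> fhat k (x k) + L / 2 * (norm (x k - y k))\<^sup>2"
      using model_lower[OF k, of "x k"] by simp
    finally show ?thesis using p model_upper[OF k, of z] by linarith
  qed
  have tge: "t k \<ge> (real k + 1) / 2 \<and> t k \<ge> 1" if "k \<ge> 1" for k
    using that
  proof (induction k rule: dec_induct)
    case base then show ?case using t1 by simp
  next
    case (step m)
    have a: "sqrt (1 + 4 * (t m)\<^sup>2) \<ge> sqrt ((2 * t m)\<^sup>2)"
      by (intro real_sqrt_le_mono) (simp add: power_mult_distrib)
    have b: "sqrt ((2 * t m)\<^sup>2) = 2 * t m" using step.IH by (simp only: real_sqrt_abs) simp
    have "sqrt (1 + 4 * (t m)\<^sup>2) \<ge> 2 * t m" using a b by linarith
    then show ?case using t_step[OF step.hyps(1)] step.IH by auto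
  qed
  have trec: "(t (k + 1))\<^sup>2 - t (k + 1) = (t k)\<^sup>2" if k: "k \<ge> 1" for k
  proof -
    have "2 * t (k + 1) - 1 = sqrt (1 + 4 * (t k)\<^sup>2)" using t_step[OF k] by simp
    then have "(2 * t (k + 1) - 1)\<^sup>2 = 1 + 4 * (t k)\<^sup>2" by simp
    then show ?thesis by (simp add: power2_eq_square algebra_simps)
  qed
  define fs where "fs = f xstar"
  define R where "R = (norm (x 0 - xstar))\<^sup>2"
  define u where "u k = t k *\<^sub>R x k - (t k - 1) *\<^sub>R x (k - 1) - xstar" for k
  define w where "w k = (t k)\<^sup>2 * (f (x k) - fs) + L / 2 * (norm (u k))\<^sup>2" for k
  have w1: "w 1 \<le> L / 2 * R"
  proof -
    have "f (x 1) + L / 2 * (norm (xstar - x 1))\<^sup>2 \<le> f xstar + L / 2 * (norm (xstar - y 1))\<^sup>2"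
      using K[of 1 xstar] by simp
    then show ?thesis unfolding w_def u_def R_def fs_def using t1 y1
      by (simp add: norm_minus_commute)
  qed
  have wstep: "w (k + 1) \<le> w k" if k: "k \<ge> 1" for k
  proof -
    define tj where "tj = t (k + 1)"
    have tj1: "tj \<ge> 1" using tge[of "k+1"] unfolding tj_def by simp
    define z where "z = (1 - 1 / tj) *\<^sub>R x k + (1 / tj) *\<^sub>R xstar"
    have Kj: "f (x (k+1)) + L / 2 * (norm (z - x (k+1)))\<^sup>2 \<le> f z + L / 2 * (norm (z - y (k+1)))\<^sup>2"
      using K[of "k+1" z] by simp
    have cz: "f z \<le> (1 - 1 / tj) * f (x k) + (1 / tj) * fs"
      unfolding z_def fs_def using convex_onD[OF f_convex, of "1 / tj"] tj1 by simp
    have tz: "tj *\<^sub>R z = (tj - 1) *\<^sub>R x k + xstar"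
      unfolding z_def using tj1 by (simp add: algebra_simps)
    have ty: "tj *\<^sub>R y (k + 1) = tj *\<^sub>R x k + (t k - 1) *\<^sub>R (x k - x (k - 1))"
      unfolding y_step[OF k] tj_def[symmetric] using tj1 by (simp only: scaleR_add_right scaleR_scaleR) simp
    have "tj *\<^sub>R (z - x (k + 1)) = - u (k + 1)"
      unfolding u_def tj_def[symmetric] using tz by (simp add: algebra_simps)
    then have na: "tj\<^sup>2 * (norm (z - x (k + 1)))\<^sup>2 = (norm (u (k + 1)))\<^sup>2"
      by (metis norm_minus_cancel norm_scaleR power_mult_distrib power2_abs)
    have "tj *\<^sub>R (z - y (k + 1)) = tj *\<^sub>R z - tj *\<^sub>R y (k + 1)" by (simp add: scaleR_diff_right)
    also have "\<dots> = - u k" unfolding tz ty u_def by (simp add: algebra_simps)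
    finally have "tj *\<^sub>R (z - y (k + 1)) = - u k" .
    then have nb: "tj\<^sup>2 * (norm (z - y (k + 1)))\<^sup>2 = (norm (u k))\<^sup>2"
      by (metis norm_minus_cancel norm_scaleR power_mult_distrib power2_abs)
    have tt: "tj\<^sup>2 - tj = (t k)\<^sup>2" using trec[OF k] unfolding tj_def .
    have "f (x (k+1)) + L / 2 * (norm (z - x (k+1)))\<^sup>2 \<le> (1 - 1 / tj) * f (x k) + (1 / tj) * fs + L / 2 * (norm (z - y (k+1)))\<^sup>2"
      using Kj cz by linarith
    then have "tj\<^sup>2 * (f (x (k+1)) + L / 2 * (norm (z - x (k+1)))\<^sup>2)
        \<le> tj\<^sup>2 * ((1 - 1 / tj) * f (x k) + (1 / tj) * fs + L / 2 * (norm (z - y (k+1)))\<^sup>2)"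
      by (rule mult_left_mono) simp
    then have "tj\<^sup>2 * f (x (k+1)) + L / 2 * (tj\<^sup>2 * (norm (z - x (k+1)))\<^sup>2)
        \<le> (tj\<^sup>2 - tj) * f (x k) + tj * fs + L / 2 * (tj\<^sup>2 * (norm (z - y (k+1)))\<^sup>2)"
      using tj1 by (simp add: algebra_simps power2_eq_square)
    then have "tj\<^sup>2 * f (x (k+1)) + L / 2 * (norm (u (k+1)))\<^sup>2
        \<le> (t k)\<^sup>2 * f (x k) + tj * fs + L / 2 * (norm (u k))\<^sup>2"
      unfolding na nb tt .
    then show ?thesis unfolding w_def tj_def[symmetric] using tt by (simp add: algebra_simps)
  qed
  have wle: "w k \<le> L / 2 * R" if "k \<ge> 1" for k
    using that
  proof (induction k rule: dec_induct)
    case base then show ?case by (rule w1)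
  next
    case (step m) then show ?case using wstep[of m] by simp
  qed
  show ?thesis
  proof
    fix k
    show "f (x k) - f xstar \<le> 2 * L * (norm (x 0 - xstar))\<^sup>2 / (real k + 1)\<^sup>2"
    proof (cases "k = 0")
      case True
      define g where "g = gradf xstar"
      have "f xstar \<le> f (xstar - (1 / L) *\<^sub>R g)" by (rule xstar_min)
      also have "\<dots> \<le> f xstar + g \<bullet> (- (1 / L) *\<^sub>R g) + L / 2 * (norm (- (1 / L) *\<^sub>R g))\<^sup>2"
        using desc[where u=xstar and v="xstar - (1 / L) *\<^sub>R g"] unfolding g_def by simp
      also have "\<dots> = f xstar - (norm g)\<^sup>2 / (2 * L)"
        using L_pos by (simp add: power2_norm_eq_inner power2_eq_square field_simps norm_eq_sqrt_inner)
      finally have "(norm g)\<^sup>2 / (2 * L) \<le> 0" by simp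
      then have "g = 0" using L_pos by (simp add: divide_le_0_iff)
      then have "f (x 0) \<le> f xstar + L / 2 * R"
        using desc[where u=xstar and v="x 0"] unfolding g_def R_def by (simp add: norm_minus_commute)
      moreover have "L * R \<ge> 0" unfolding R_def using L_pos by simp
      ultimately have "f (x 0) - f xstar \<le> 2 * L * R" by linarith
      then show ?thesis using True unfolding R_def by simp
    next
      case False
      then have k: "k \<ge> 1" by simp
      have v0: "f (x k) - fs \<ge> 0" unfolding fs_def using xstar_min by simp
      have "(t k)\<^sup>2 * (f (x k) - fs) \<le> L / 2 * R"
        using wle[OF k] unfolding w_def using L_pos
        by (smt (verit) mult_nonneg_nonneg zero_le_power2 divide_nonneg_pos)
      moreover have "((real k + 1) / 2)\<^sup>2 \<le> (t k)\<^sup>2"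
        using tge[OF k] by (intro power_mono) auto
      ultimately have "((real k + 1) / 2)\<^sup>2 * (f (x k) - fs) \<le> L / 2 * R"
        using v0 by (smt (verit) mult_right_mono)
      then have "(real k + 1)\<^sup>2 * (f (x k) - fs) \<le> 2 * L * R"
        by (simp add: power_divide field_simps)
      then show ?thesis unfolding fs_def R_def
        by (simp add: field_simps)
    qed
  qed
qed

end
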